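(* Let $\mathcal{L}$ be an ordered field with a convex valuation with value group $\Gamma$, and let $A\in {\operatorname{\mathsf{TPD}}}_n(\mathbb{S}_{\max}^{\vee})$. Then, there exists a $n\times n$ symmetric positive definite matrix ${\bf A}$ over $\mathcal{L}$ such that $\mathrm{sv}({\bf A})= A$.
   Context: $\Gamma$ is a divisible totally ordered abelian group and $\mathbb{S}_{\max}=\mathbb{S}_{\max}(\Gamma)$ the symmetrized tropical semiring, with zero $\mathbf{0}$, unit $\mathbf{1}$, minus $\ominus$; $\mathbb{S}_{\max}^\vee$ is the set of signed elements. $A\in{\operatorname{\mathsf{TPD}}}_n(\mathbb{S}_{\max}^\vee)$ means $A=(a_{ij})$ symmetric with signed entries, $\mathbf{0}<a_{ii}$ and $a_{ij}^2<a_{ii}a_{jj}$ for $i\ne j$ (where $a<b$ iff $b\ominus a$ is positive). For an ordered field $\mathcal{L}$ with a convex (surjective, non-Archimedean) valuation $\mathrm v:\mathcal{L}\to\Gamma\cup\{\bot\}$, the signed valuation is $\mathrm{sv}(b)=\mathrm{sgn}(b)\odot\mathrm v(b)$, where $\mathrm{sgn}(b)$ is $\mathbf{1}$, $\ominus\mathbf{1}$ or $\mathbf{0}$ according as $b>0$, $b<0$, $b=0$; it is applied entrywise. *)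

theory Defs
  imports Main
begin

definition divisible_group :: "('g::linordered_ab_group_add) itself \<Rightarrow> bool" where
  "divisible_group _ \<longleftrightarrow> (\<forall>(x::'g) (n::nat). n > 0 \<longrightarrow> (\<exists>y::'g. (\<Sum>i<n. y) = x))"

text \<open>Elements: zero, positive gamma, negative (ominus gamma), balanced (gamma degree).\<close>
datatype 'g smax = SZero | SPos 'g | SNeg 'g | SBal 'g

fun smodulus :: "'g smax \<Rightarrow> 'g" where
  "smodulus (SPos g) = g" | "smodulus (SNeg g) = g" | "smodulus (SBal g) = g"
| "smodulus SZero = undefined"

fun ssign :: "'g smax \<Rightarrow> int" where
  "ssign SZero = 0" | "ssign (SPos g) = 1" | "ssign (SNeg g) = -1" | "ssign (SBal g) = 0"

definition smk :: "int \<Rightarrow> 'g \<Rightarrow> 'g smax" where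
  "smk s g = (if s = 1 then SPos g else if s = -1 then SNeg g else SBal g)"

definition splus :: "('g::linorder) smax \<Rightarrow> 'g smax \<Rightarrow> 'g smax" (infixl "\<oplus>\<^sub>S" 65) where
  "splus a b = (if a = SZero then b else if b = SZero then a
     else if smodulus b < smodulus a then a
     else if smodulus a < smodulus b then b
     else if a = b then a else SBal (smodulus a))"

definition stimes :: "('g::ab_semigroup_add) smax \<Rightarrow> 'g smax \<Rightarrow> 'g smax" (infixl "\<odot>\<^sub>S" 70) where
  "stimes a b = (if a = SZero \<or> b = SZero then SZero
     else (if ssign a = 0 \<or> ssign b = 0 then SBal (smodulus a + smodulus b)
           else smk (ssign a * ssign b) (smodulus a + smodulus b)))"

fun sminus :: "'g smax \<Rightarrow> 'g smax" where
  "sminus SZero = SZero" | "sminus (SPos g) = SNeg g" | "sminus (SNeg g) = SPos g"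
| "sminus (SBal g) = SBal g"

definition sunit :: "('g::zero) smax" where "sunit = SPos 0"

definition spositive :: "'g smax \<Rightarrow> bool" where
  "spositive a \<longleftrightarrow> (\<exists>g. a = SPos g)"

definition ssigned :: "'g smax \<Rightarrow> bool" where
  "ssigned a \<longleftrightarrow> a = SZero \<or> (\<exists>g. a = SPos g) \<or> (\<exists>g. a = SNeg g)"

definition sless :: "('g::linorder) smax \<Rightarrow> 'g smax \<Rightarrow> bool" where
  "sless a b \<longleftrightarrow> spositive (b \<oplus>\<^sub>S sminus a)"

definition TPD :: "('n::finite \<Rightarrow> 'n \<Rightarrow> ('g::linordered_ab_group_add) smax) \<Rightarrow> bool" where
  "TPD A \<longleftrightarrow> (\<forall>i j. A i j = A j i) \<and> (\<forall>i j. ssigned (A i j))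
     \<and> (\<forall>i. sless SZero (A i i))
     \<and> (\<forall>i j. i \<noteq> j \<longrightarrow> sless (A i j \<odot>\<^sub>S A i j) (A i i \<odot>\<^sub>S A j j))"

text \<open>v : L -> Gamma \<union> {bot}, with None playing the role of bot.\<close>
definition convex_valuation :: "(('a::linordered_field) \<Rightarrow> ('g::linordered_ab_group_add) option) \<Rightarrow> bool" where
  "convex_valuation v \<longleftrightarrow>
     (\<forall>x. v x = None \<longleftrightarrow> x = 0)
   \<and> (\<forall>x y. x \<noteq> 0 \<longrightarrow> y \<noteq> 0 \<longrightarrow> v (x * y) = Some (the (v x) + the (v y)))
   \<and> (\<forall>x y. x \<noteq> 0 \<longrightarrow> y \<noteq> 0 \<longrightarrow> x + y \<noteq> 0 \<longrightarrow> the (v (x + y)) \<le> max (the (v x)) (the (v y)))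
   \<and> (\<forall>g. \<exists>x. v x = Some g)
   \<and> (\<forall>x y. 0 < x \<longrightarrow> x \<le> y \<longrightarrow> the (v x) \<le> the (v y))"

definition sval :: "(('a::linordered_field) \<Rightarrow> 'g option) \<Rightarrow> 'a \<Rightarrow> 'g smax" where
  "sval v b = (if b > 0 then SPos (the (v b)) else if b < 0 then SNeg (the (v b)) else SZero)"

definition sym_pos_def :: "('n::finite \<Rightarrow> 'n \<Rightarrow> 'a::linordered_field) \<Rightarrow> bool" where
  "sym_pos_def B \<longleftrightarrow> (\<forall>i j. B i j = B j i)
     \<and> (\<forall>x::'n \<Rightarrow> 'a. x \<noteq> (\<lambda>_. 0) \<longrightarrow> (\<Sum>i\<in>UNIV. \<Sum>j\<in>UNIV. x i * B i j * x j) > 0)"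

end

theory Submission
  imports Defs
begin

lemma quad_bound:
  fixes p q c u w :: "'a::linordered_field"
  assumes "p > 0" "q > 0" "c * c \<le> p * q"
  shows "- (c * u * w) \<le> (p * u * u + q * w * w) / 2"
proof -
  have "0 \<le> (p*u + c*w) * (p*u + c*w) + (p*q - c*c) * (w*w)"
    using assms by (intro add_nonneg_nonneg) (auto intro: mult_nonneg_nonneg)
  also have "\<dots> = p * (p * u * u + q * w * w + 2 * (c * u * w))"
    by (simp add: algebra_simps)
  finally have "0 \<le> p * (p * u * u + q * w * w + 2 * (c * u * w))" .
  hence "0 \<le> p * u * u + q * w * w + 2 * (c * u * w)"
    using assms(1) by (simp add: zero_le_mult_iff)
  thus ?thesis by (simp add: field_simps)
qed

lemma cv_one:
  assumes "convex_valuation v"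
  shows "v (1::'a::linordered_field) = Some (0::'g::linordered_ab_group_add)"
proof -
  have a: "\<forall>x. v x = None \<longleftrightarrow> x = 0"
    and m: "\<forall>x y. x \<noteq> 0 \<longrightarrow> y \<noteq> 0 \<longrightarrow> v (x * y) = Some (the (v x) + the (v y))"
    using assms unfolding convex_valuation_def by auto
  have "v (1 * 1) = Some (the (v (1::'a)) + the (v 1))" using m[rule_format, of "1::'a" "1::'a"] by simp
  moreover have "v (1::'a) = Some (the (v 1))" using a by (cases "v (1::'a)") auto
  ultimately have "Some (the (v (1::'a)) + the (v 1)) = Some (the (v 1))" by (metis mult_1)
  hence "the (v (1::'a)) + the (v 1) = the (v 1)" by (simp only: option.inject)
  hence "the (v (1::'a)) = 0" by (metis add_cancel_right_right)
  thus ?thesis using \<open>v (1::'a) = Some (the (v 1))\<close> by simp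
qed

lemma cv_neg:
  assumes "convex_valuation v" "(x::'a::linordered_field) \<noteq> 0"
  shows "v (- x) = (v x :: 'g::linordered_ab_group_add option)"
proof -
  have a: "\<forall>x. v x = None \<longleftrightarrow> x = 0"
    and m: "\<forall>x y. x \<noteq> 0 \<longrightarrow> y \<noteq> 0 \<longrightarrow> v (x * y) = Some (the (v x) + the (v y))"
    using assms unfolding convex_valuation_def by auto
  have "v ((-1) * (-1::'a)) = Some (the (v (-1::'a)) + the (v (-1)))" using m[rule_format, of "-1::'a" "-1::'a"] by simp
  hence "the (v (-1::'a)) + the (v (-1)) = 0" using cv_one[OF assms(1)] by simp
  hence e: "the (v (-1::'a)) = 0"
  proof -
    assume h: "the (v (-1::'a)) + the (v (-1)) = 0"
    show ?thesis
    proof (rule ccontr)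
      assume "the (v (-1::'a)) \<noteq> 0"
      hence "the (v (-1::'a)) < 0 \<or> the (v (-1::'a)) > 0" by auto
      thus False using h add_neg_neg[of "the (v (-1::'a))" "the (v (-1::'a))"]
        add_pos_pos[of "the (v (-1::'a))" "the (v (-1::'a))"] by auto
    qed
  qed
  have "v ((-1) * x) = Some (the (v (-1::'a)) + the (v x))" using m[rule_format, of "-1" x] assms(2) by simp
  moreover have "v x = Some (the (v x))" using a assms(2) by (cases "v x") auto
  ultimately show ?thesis using e by simp
qed

lemma cv_nat_le:
  assumes "convex_valuation v" "n \<ge> 1"
  shows "the (v (of_nat n :: 'a::linordered_field)) \<le> (0::'g::linordered_ab_group_add)"
  using assms(2)
proof (induction n rule: dec_induct)
  case base
  then show ?case using cv_one[OF assms(1)] by simp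
next
  case (step n)
  have s: "\<forall>x y. x \<noteq> 0 \<longrightarrow> y \<noteq> 0 \<longrightarrow> x + y \<noteq> 0 \<longrightarrow> the (v (x + y)) \<le> max (the (v x)) (the (v y))"
    using assms(1) unfolding convex_valuation_def by auto
  have np: "(of_nat n :: 'a) > 0" using step(1) by simp
  have "(of_nat n :: 'a) \<noteq> 0" "(of_nat n :: 'a) + 1 \<noteq> 0" using np by (simp, metis add_pos_pos less_irrefl zero_less_one)
  hence "the (v ((of_nat n :: 'a) + 1)) \<le> max (the (v (of_nat n :: 'a))) (the (v (1::'a)))"
    using s by auto
  thus ?case using step(3) cv_one[OF assms(1)] by (simp add: add.commute)
qed

lemma cv_small:
  assumes "convex_valuation v" "(y::'a::linordered_field) > 0" "z > 0"
    "the (v y) < (the (v z) :: 'g::linordered_ab_group_add)" "N \<ge> 1"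
  shows "of_nat N * y < z"
proof (rule ccontr)
  assume "\<not> of_nat N * y < z"
  hence le: "z \<le> of_nat N * y" by simp
  have mono: "\<forall>x y. 0 < x \<longrightarrow> x \<le> y \<longrightarrow> the (v x) \<le> the (v y)"
    and m: "\<forall>x y. x \<noteq> 0 \<longrightarrow> y \<noteq> 0 \<longrightarrow> v (x * y) = Some (the (v x) + the (v y))"
    using assms(1) unfolding convex_valuation_def by auto
  have "the (v z) \<le> the (v (of_nat N * y))" using mono le assms(3) by blast
  also have "\<dots> = the (v (of_nat N :: 'a)) + the (v y)"
    using m assms(2,5) by simp
  also have "\<dots> \<le> the (v y)" using cv_nat_le[OF assms(1) assms(5)] by simp
  finally show False using assms(4) by simp
qed

theorem proposition6p2:
  fixes v :: "'a::linordered_field \<Rightarrow> 'g::linordered_ab_group_add option"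
    and A :: "'n::finite \<Rightarrow> 'n \<Rightarrow> 'g smax"
  assumes "divisible_group TYPE('g)"
    and "convex_valuation v"
    and "TPD A"
  shows "\<exists>B :: 'n \<Rightarrow> 'n \<Rightarrow> 'a. sym_pos_def B \<and> (\<forall>i j. sval v (B i j) = A i j)"
proof -
  have cva: "\<forall>x. v x = None \<longleftrightarrow> x = 0"
    and m: "\<forall>x y. x \<noteq> 0 \<longrightarrow> y \<noteq> 0 \<longrightarrow> v (x * y) = Some (the (v x) + the (v y))"
    and su: "\<forall>g. \<exists>x. v x = Some g"
    using assms(2) unfolding convex_valuation_def by auto
  have ex: "\<exists>x. x > 0 \<and> v x = Some g" for g
  proof -
    obtain x where x: "v x = Some g" using su by blast
    hence "x \<noteq> 0" using cva by (metis option.distinct(1))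
    show ?thesis
    proof (cases "x > 0")
      case True then show ?thesis using x by blast
    next
      case False
      hence "-x > 0" using \<open>x \<noteq> 0\<close> by simp
      moreover have "v (-x) = Some g" using cv_neg[OF assms(2) \<open>x \<noteq> 0\<close>] x by simp
      ultimately show ?thesis by blast
    qed
  qed
  define e where "e g = (SOME x. x > 0 \<and> v x = Some g)" for g
  have e: "e g > 0" "v (e g) = Some g" for g
    using someI_ex[OF ex[of g]] unfolding e_def by auto
  define B where "B i j = (case A i j of SPos g \<Rightarrow> e g | SNeg g \<Rightarrow> - e g | _ \<Rightarrow> 0)" for i j
  have symA: "A i j = A j i" for i j using assms(3) unfolding TPD_def by auto
  have sgA: "ssigned (A i j)" for i j using assms(3) unfolding TPD_def by auto
  have posA: "sless SZero (A i i)" for i using assms(3) unfolding TPD_def by auto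
  have offA: "i \<noteq> j \<Longrightarrow> sless (A i j \<odot>\<^sub>S A i j) (A i i \<odot>\<^sub>S A j j)" for i j
    using assms(3) unfolding TPD_def by auto
  have diag: "\<exists>d. A i i = SPos d" for i
    using posA[of i] unfolding sless_def splus_def spositive_def by (auto split: if_splits)
  obtain d where d: "\<And>i. A i i = SPos (d i)" using diag by metis
  have Bd: "B i i = e (d i)" for i unfolding B_def using d by simp
  have Bpos: "B i i > 0" for i using Bd e by simp
  have svB: "sval v (B i j) = A i j" for i j
  proof -
    consider "A i j = SZero" | g where "A i j = SPos g" | g where "A i j = SNeg g"
      using sgA[of i j] unfolding ssigned_def by auto
    then show ?thesis
    proof cases
      case 1 then show ?thesis unfolding B_def sval_def by simp
    next
      case (2 g) then show ?thesis unfolding B_def sval_def using e[of g] by simp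
    next
      case (3 g) then show ?thesis unfolding B_def sval_def using e[of g]
          cv_neg[OF assms(2), of "e g"] by simp
    qed
  qed
  define N where "N = card (UNIV :: 'n set)"
  have N1: "N \<ge> 1" unfolding N_def by (metis Suc_leI One_nat_def card_gt_0_iff finite UNIV_not_empty)
  have key: "(4 * of_nat N * of_nat N) * (B i j * B i j) < B i i * B j j" if "i \<noteq> j" for i j
  proof -
    have BB: "B i i * B j j > 0" using Bpos by simp
    consider "A i j = SZero" | g where "A i j = SPos g" | g where "A i j = SNeg g"
      using sgA[of i j] unfolding ssigned_def by auto
    then show ?thesis
    proof cases
      case 1
      have "B i j = 0" unfolding B_def using 1 by simp
      then show ?thesis using BB by simp
    next
      case (2 g)
      have "sless (SPos (g+g)) (SPos (d i + d j))"
        using offA[OF that] 2 d unfolding stimes_def smk_def by simp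
      hence lt: "g + g < d i + d j" unfolding sless_def splus_def spositive_def
        by (auto split: if_splits)
      have bij: "B i j * B i j = e g * e g" unfolding B_def using 2 by simp
      have v1: "the (v (e g * e g)) = g + g" using m[rule_format, of "e g" "e g"] e[of g] by simp
      have v2: "the (v (B i i * B j j)) = d i + d j" using m[rule_format, of "e (d i)" "e (d j)"] e Bd by (simp add: less_imp_neq[symmetric])
      have "of_nat (4*N*N) * (e g * e g) < B i i * B j j"
        by (rule cv_small[OF assms(2)]) (use e[of g] BB v1 v2 lt N1 in auto)
      thus ?thesis using bij by simp
    next
      case (3 g)
      have "sless (SPos (g+g)) (SPos (d i + d j))"
        using offA[OF that] 3 d unfolding stimes_def smk_def by simp
      hence lt: "g + g < d i + d j" unfolding sless_def splus_def spositive_def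
        by (auto split: if_splits)
      have bij: "B i j * B i j = e g * e g" unfolding B_def using 3 by simp
      have v1: "the (v (e g * e g)) = g + g" using m[rule_format, of "e g" "e g"] e[of g] by simp
      have v2: "the (v (B i i * B j j)) = d i + d j" using m[rule_format, of "e (d i)" "e (d j)"] e Bd by (simp add: less_imp_neq[symmetric])
      have "of_nat (4*N*N) * (e g * e g) < B i i * B j j"
        by (rule cv_small[OF assms(2)]) (use e[of g] BB v1 v2 lt N1 in auto)
      thus ?thesis using bij by simp
    qed
  qed
  have symB: "B i j = B j i" for i j unfolding B_def using symA[of i j] by simp
  have pd: "(\<Sum>i\<in>UNIV. \<Sum>j\<in>UNIV. x i * B i j * x j) > 0" if x: "x \<noteq> (\<lambda>_. 0)" for x
  proof -
    define Nr :: 'a where "Nr = of_nat N"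
    have Nr: "Nr \<ge> 1" using N1 unfolding Nr_def by simp
    define f where "f i = B i i * x i * x i" for i
    have f0: "f i \<ge> 0" for i unfolding f_def using Bpos[of i]
      by (metis mult_nonneg_nonneg less_imp_le mult.assoc zero_le_square)
    obtain k where "x k \<noteq> 0" using x by auto
    hence fk: "f k > 0" unfolding f_def using Bpos[of k]
      by (metis mult_pos_pos mult.assoc not_square_less_zero linorder_neqE less_irrefl zero_less_mult_iff)
    define S where "S = (\<Sum>i\<in>UNIV. f i)"
    have Spos: "S > 0" unfolding S_def
      using fk f0 by (intro sum_pos2[of UNIV k]) auto
    have trm: "x i * B i j * x j \<ge> (if i = j then f i else 0) - (f i + f j) / (4 * Nr)" for i j
    proof (cases "i = j")
      case True
      have "(f i + f j) / (4 * Nr) \<ge> 0" using f0 Nr by simp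
      thus ?thesis using True unfolding f_def by (simp add: algebra_simps)
    next
      case False
      have p: "B i i / (2*Nr) > 0" "B j j / (2*Nr) > 0" using Bpos Nr by simp_all
      have "(4 * Nr * Nr) * (B i j * B i j) < B i i * B j j" using key[OF False] unfolding Nr_def by simp
      hence "B i j * B i j \<le> (B i i / (2*Nr)) * (B j j / (2*Nr))"
        using Nr by (simp add: field_simps)
      from quad_bound[OF p this, of "x i" "x j"]
      have "- (B i j * x i * x j) \<le> (B i i / (2 * Nr) * x i * x i + B j j / (2 * Nr) * x j * x j) / 2" .
      also have "\<dots> = (f i + f j) / (4 * Nr)" unfolding f_def using Nr by (simp add: field_simps)
      finally show ?thesis using False by (simp add: algebra_simps)
    qed
    have "(\<Sum>i\<in>UNIV. \<Sum>j\<in>UNIV. x i * B i j * x j)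
        \<ge> (\<Sum>i\<in>UNIV. \<Sum>j\<in>UNIV. (if i = j then f i else 0) - (f i + f j) / (4 * Nr))"
      by (intro sum_mono trm)
    also have "(\<Sum>i\<in>UNIV. \<Sum>j\<in>UNIV. (if i = j then f i else 0) - (f i + f j) / (4 * Nr))
        = S - (Nr * S + Nr * S) / (4 * Nr)"
    proof -
      have inner: "(\<Sum>j\<in>UNIV. (if i = j then f i else 0) - (f i + f j) / (4 * Nr))
          = f i - (Nr * f i + S) / (4 * Nr)" for i
      proof -
        have "(\<Sum>j\<in>UNIV. (f i + f j) / (4 * Nr)) = (\<Sum>j\<in>UNIV. (f i + f j)) / (4 * Nr)"
          by (rule sum_divide_distrib[symmetric])
        also have "(\<Sum>j\<in>UNIV. (f i + f j)) = Nr * f i + S"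
          unfolding S_def Nr_def N_def by (simp add: sum.distrib)
        finally show ?thesis by (simp add: sum_subtractf)
      qed
      have "(\<Sum>i\<in>UNIV. f i - (Nr * f i + S) / (4 * Nr))
          = S - (\<Sum>i\<in>UNIV. (Nr * f i + S)) / (4 * Nr)"
        unfolding S_def by (simp add: sum_subtractf sum_divide_distrib)
      also have "(\<Sum>i\<in>UNIV. (Nr * f i + S)) = Nr * S + Nr * S"
        unfolding Nr_def N_def by (simp add: sum.distrib sum_distrib_left S_def)
      finally show ?thesis using inner by simp
    qed
    also have "\<dots> = S / 2" using Nr by (simp add: field_simps)
    finally show ?thesis using Spos by simp
  qed
  show ?thesis
    by (rule exI[of _ B]) (use symB pd svB in \<open>auto simp: sym_pos_def_def\<close>)
qed

end
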